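(* Let $\hat g:\mathbb C\to\mathbb C$ be the map defined in the context. Then $\hat g$ is differentiable almost everywhere and $$|\det D\hat g(z)|\ge\frac{\sin\theta_{\mathcal S}\,\min_{x\in Q}|\mathfrak h_{gen}(x)|\,\lambda\,e^{2\lambda\operatorname{Re} z}}{2L}\quad\text{for almost every }z\in\mathbb C.$$
   Context: Let $Q=[-1,1]^2$ and let $\mathfrak h_{gen}=(\mathfrak h_{gen,1},\mathfrak h_{gen,2},\mathfrak h_{gen,3}):Q\to\mathbb R^3$ be a sense-preserving $L$-bi-Lipschitz map ($|a-b|/L\le|\mathfrak h_{gen}(a)-\mathfrak h_{gen}(b)|\le L|a-b|$) onto a surface $\mathcal S=\mathfrak h_{gen}(Q)$ such that: (1) $\mathcal S\subset\{x_3\ge0\}$; (2) $\mathfrak h_{gen}(\partial Q)$ lies in the plane $x_3=0$; (3) for each $x\in Q$ the ray from $0$ through $\mathfrak h_{gen}(x)$ meets $\mathcal S$ only at $\mathfrak h_{gen}(x)$; (4) (non-tangential position vector property) there are $\theta_{\mathcal S}\in(0,\pi/2)$ and $\varepsilon>0$ such that for all distinct $w,z\in\mathcal S$ with $|w-z|\le\varepsilon$ the acute angle between the line through $0$ and $z$ and the line through $w$ and $z$ is greater than $\theta_{\mathcal S}$; (5) $\min_{x\in Q}|\mathfrak h_{gen}(x)|>0$. Assume also $\mathfrak h_{gen,1}(t,t)=\mathfrak h_{gen,2}(t,t)$, $\mathfrak h_{gen,1}(t,-t)=-\mathfrak h_{gen,2}(t,-t)$ for $t\in[-1,1]$, $\mathfrak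 h_{gen}(0,0)=(0,0,1)$ and $\sup_{x\in Q}|\mathfrak h_{gen}(x)|=1$. Let $\lambda\ge1$. Define $\hat g$ as follows: for $z=x+iy$ with $y\in[4k-1,4k+1]$, $k\in\mathbb Z$, let $\hat g(z)=e^{\lambda x}\big(\mathfrak h_{gen,3}(y-4k,y-4k)+i\,\mathfrak h_{gen,1}(y-4k,y-4k)\big)$; for $y\in[4k+1,4k+3]$ let $\hat g(z)=\hat g(\bar z+2i)$. (This is the conjugate, via $(x_1,x_1,x_3)\mapsto(x_3+ix_1)/\lambda$, of the generalized Zorich map $\mathcal Z_{gen}$ built from $h_{gen}=\lambda\mathfrak h_{gen}(\cdot/\lambda)$, restricted to the invariant plane $x_1=x_2$.) *)

theory Defs
  imports "HOL-Analysis.Analysis" "HOL-Complex_Analysis.Complex_Analysis"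
begin

definition sqQ :: "(real \<times> real) set" where
  "sqQ = {-1..1} \<times> {-1..1}"

definition sqQ_boundary :: "real \<Rightarrow> real \<times> real" where
  "sqQ_boundary = linepath (-1,-1) (1,-1) +++ linepath (1,-1) (1,1)
      +++ linepath (1,1) (-1,1) +++ linepath (-1,1) (-1,-1)"

text \<open>Sense-preserving (w.r.t. the upward orientation of the surface, which lies in
  the upper half-space with boundary curve in the plane x3 = 0): the boundary curve
  h(boundary Q), projected to the plane x3 = 0 (identified with C), winds once
  positively around the origin.\<close>
definition sense_preserving_surf :: "(real \<times> real \<Rightarrow> real^3) \<Rightarrow> bool" where
  "sense_preserving_surf h \<longleftrightarrow>
     winding_number (\<lambda>t. Complex (h (sqQ_boundary t) $ 1) (h (sqQ_boundary t) $ 2)) 0 = 1"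

definition bi_lipschitz_on :: "real \<Rightarrow> ('a::metric_space) set \<Rightarrow> ('a \<Rightarrow> 'b::metric_space) \<Rightarrow> bool" where
  "bi_lipschitz_on L S f \<longleftrightarrow>
     (\<forall>a\<in>S. \<forall>b\<in>S. dist a b / L \<le> dist (f a) (f b) \<and> dist (f a) (f b) \<le> L * dist a b)"

definition acute_line_angle :: "real^3 \<Rightarrow> real^3 \<Rightarrow> real" where
  "acute_line_angle z w = arccos (\<bar>z \<bullet> (w - z)\<bar> / (norm z * norm (w - z)))"

definition ghat_strip :: "(real \<times> real \<Rightarrow> real^3) \<Rightarrow> real \<Rightarrow> complex \<Rightarrow> complex" where
  "ghat_strip h lam z =
     (let k = \<lfloor>(Im z + 1) / 4\<rfloor>; s = Im z - 4 * real_of_int k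
      in complex_of_real (exp (lam * Re z)) * Complex (h (s, s) $ 3) (h (s, s) $ 1))"

definition ghat :: "(real \<times> real \<Rightarrow> real^3) \<Rightarrow> real \<Rightarrow> complex \<Rightarrow> complex" where
  "ghat h lam z =
     (if Im z - 4 * real_of_int \<lfloor>(Im z + 1) / 4\<rfloor> \<le> 1 then ghat_strip h lam z
      else ghat_strip h lam (cnj z + 2 * \<i>))"

definition jac_det :: "(complex \<Rightarrow> complex) \<Rightarrow> complex \<Rightarrow> real" where
  "jac_det f z = (let D = frechet_derivative f (at z) in
      Re (D 1) * Im (D \<i>) - Im (D 1) * Re (D \<i>))"

end

theory Submission
  imports Defs
begin

lemma countable_finite_approx:
  assumes C: "countable C" and S: "S \<in> lmeasurable"
    and B: "\<And>i. i \<in> C \<Longrightarrow> B i \<in> sets lebesgue"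
    and N: "negligible (S - (\<Union>i\<in>C. B i))" and e: "e > 0"
  obtains F where "finite F" "F \<subseteq> C" "measure lebesgue (S - (\<Union>i\<in>F. B i)) < e"
proof (cases "C = {}")
  case True
  then have "negligible S" using N by simp
  then have "measure lebesgue S = 0" by (simp add: negligible_iff_measure)
  then show ?thesis using that[of "{}"] True e by simp
next
  case False
  define f where "f = from_nat_into C"
  have rf: "range f = C" unfolding f_def using C False by (simp add: range_from_nat_into)
  define A where "A n = S \<inter> (\<Union>k\<le>n. B (f k))" for n
  have fC: "f k \<in> C" for k using rf by auto
  have Asets: "range A \<subseteq> sets lebesgue"
    unfolding A_def using S fC B by (auto intro!: sets.Int sets.finite_UN)
  have inc: "incseq A" unfolding A_def incseq_def by (fastforce simp: subset_iff)
  have UA: "(\<Union>n. A n) = S \<inter> (\<Union>i\<in>C. B i)"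
    unfolding A_def using rf by auto
  have fin: "emeasure lebesgue (\<Union>n. A n) \<noteq> \<infinity>"
  proof -
    have "emeasure lebesgue (\<Union>n. A n) \<le> emeasure lebesgue S"
      using S UA by (intro emeasure_mono) auto
    then show ?thesis using S by (auto simp: fmeasurable_def top_unique)
  qed
  have lim: "(\<lambda>n. measure lebesgue (A n)) \<longlonglongrightarrow> measure lebesgue (\<Union>n. A n)"
    by (rule Lim_measure_incseq[OF Asets inc fin])
  have SU: "S \<inter> (\<Union>i\<in>C. B i) \<in> lmeasurable"
    using S B C by (intro fmeasurable_Int_fmeasurable sets.countable_UN'') auto
  have "measure lebesgue (S - (S \<inter> (\<Union>i\<in>C. B i))) = measure lebesgue S - measure lebesgue (S \<inter> (\<Union>i\<in>C. B i))"
    using S SU by (intro measure_Diff) (auto simp: fmeasurable_def)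
  then have "measure lebesgue S = measure lebesgue (S \<inter> (\<Union>i\<in>C. B i)) + measure lebesgue (S - (\<Union>i\<in>C. B i))"
    by (simp add: Diff_Int)
  also have "measure lebesgue (S - (\<Union>i\<in>C. B i)) = 0" using N by (simp add: negligible_iff_measure)
  finally have mS: "measure lebesgue (\<Union>n. A n) = measure lebesgue S" using UA by simp
  obtain n where n: "measure lebesgue S - e < measure lebesgue (A n)"
  proof -
    have "\<forall>\<^sub>F n in sequentially. measure lebesgue S - e < measure lebesgue (A n)"
      using lim mS e by (intro order_tendstoD(1)) auto
    then show ?thesis using that by (auto simp: eventually_sequentially)
  qed
  have An: "A n \<in> lmeasurable" "A n \<subseteq> S"
    using S Asets unfolding A_def by (auto intro!: fmeasurable_Int_fmeasurable sets.finite_UN B fC)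
  have eq: "S - (\<Union>i\<in>f ` {..n}. B i) = S - A n" unfolding A_def by auto
  have "measure lebesgue (S - A n) = measure lebesgue S - measure lebesgue (A n)"
    using An S by (intro measure_Diff) (auto simp: fmeasurable_def)
  then show ?thesis using that[of "f ` {..n}"] n eq fC by auto
qed

lemma quot_interval:
  fixes g :: "real \<Rightarrow> real" assumes h: "h \<noteq> 0"
  shows "g (x + h/2 + \<bar>h\<bar>/2) - g (x + h/2 - \<bar>h\<bar>/2) = 2*(\<bar>h\<bar>/2) * ((g (x+h) - g x)/h)"
proof (cases "h > 0")
  case True
  then have "x + h/2 + \<bar>h\<bar>/2 = x + h" "x + h/2 - \<bar>h\<bar>/2 = x" by auto
  then show ?thesis using True by (simp add: add.commute)
next
  case False
  then have e: "x + h/2 + \<bar>h\<bar>/2 = x" "x + h/2 - \<bar>h\<bar>/2 = x + h" "\<bar>h\<bar> = - h" using h by auto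
  have "2*(- h/2) * (a/h) = - a" for a using h by (simp add: field_simps)
  then show ?thesis unfolding e using h by (simp add: add.commute)
qed

lemma disjnt_cball_real:
  fixes a b r s :: real
  assumes "disjnt (cball a r) (cball b s)" "0 \<le> r" "0 \<le> s"
  shows "a + r < b - s \<or> b + s < a - r"
proof (rule ccontr)
  assume "\<not> ?thesis"
  then have "max (a - r) (b - s) \<in> cball a r \<inter> cball b s"
    using assms by (auto simp: dist_real_def max_def)
  then show False using assms(1) by (auto simp: disjnt_def)
qed

lemma interval_cover:
  fixes g :: "real \<Rightarrow> real"
  assumes h: "h \<noteq> 0" "\<bar>h\<bar> < d" "ball x d \<subseteq> V"
  shows "x \<in> cball (x + h/2) (\<bar>h\<bar>/2)" "cball (x + h/2) (\<bar>h\<bar>/2) \<subseteq> V"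
    "g ((x + h/2) + \<bar>h\<bar>/2) - g ((x + h/2) - \<bar>h\<bar>/2) = (2*(\<bar>h\<bar>/2)) * ((g (x+h) - g x)/h)"
proof -
  show "x \<in> cball (x + h/2) (\<bar>h\<bar>/2)" by (simp add: dist_real_def)
  have "cball (x + h/2) (\<bar>h\<bar>/2) \<subseteq> ball x d"
  proof
    fix y assume "y \<in> cball (x + h/2) (\<bar>h\<bar>/2)"
    then have y: "\<bar>x + h/2 - y\<bar> \<le> \<bar>h\<bar>/2" by (simp add: dist_real_def)
    have "\<bar>(x + h/2 - y) + (- h/2)\<bar> \<le> \<bar>x + h/2 - y\<bar> + \<bar>- h/2\<bar>" by (rule abs_triangle_ineq)
    then have "\<bar>x - y\<bar> \<le> \<bar>h\<bar>" using y by simp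
    then show "y \<in> ball x d" using h by (simp add: dist_real_def)
  qed
  then show "cball (x + h/2) (\<bar>h\<bar>/2) \<subseteq> V" using h by blast
  show "g ((x + h/2) + \<bar>h\<bar>/2) - g ((x + h/2) - \<bar>h\<bar>/2) = (2*(\<bar>h\<bar>/2)) * ((g (x+h) - g x)/h)"
    using quot_interval[OF h(1)] by simp
qed

lemma vitali_core:
  fixes g :: "real \<Rightarrow> real"
  assumes mono: "\<And>x y. x \<le> y \<Longrightarrow> g x \<le> g y"
    and S: "S \<in> lmeasurable" and p: "0 < p" "p < q"
    and low: "\<And>x. x \<in> S \<Longrightarrow> \<exists>\<^sub>F h in at 0. (g (x+h) - g x)/h < p"
    and up: "\<And>x. x \<in> S \<Longrightarrow> \<exists>\<^sub>F h in at 0. q < (g (x+h) - g x)/h"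
  shows "measure lebesgue S = 0"
proof -
  define \<mu> where "\<mu> = measure lebesgue S"
  have \<mu>0: "\<mu> \<ge> 0" by (simp add: \<mu>_def)
  have q0: "q > 0" using p by simp
  define cb where "cb i = cball (fst i) (snd i)" for i :: "real \<times> real"
  define dg where "dg i = g (fst i + snd i) - g (fst i - snd i)" for i :: "real \<times> real"
  define io where "io i = {g (fst i - snd i)<..<g (fst i + snd i)}" for i :: "real \<times> real"
  have mio: "measure lebesgue (io i) = dg i" if "snd i \<ge> 0" for i
    using mono[of "fst i - snd i" "fst i + snd i"] that by (simp add: io_def dg_def)
  have mcb: "measure lebesgue (cb i) = 2 * snd i" if "snd i \<ge> 0" for i
    using that by (simp add: cb_def cball_eq_atLeastAtMost)
  have key: "\<mu> \<le> (p/q)*(\<mu>+\<epsilon>) + 2*\<epsilon>" if \<epsilon>: "\<epsilon> > 0" for \<epsilon>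
  proof -
    obtain U where U: "open U" "S \<subseteq> U" "(U - S) \<in> lmeasurable" "emeasure lebesgue (U - S) < ennreal \<epsilon>"
      using sets_lebesgue_outer_open[of S \<epsilon>] S \<epsilon> by (auto simp: fmeasurable_def)
    have USU: "U = S \<union> (U - S)" using U by auto
    have Ul: "U \<in> lmeasurable" using S U(3) USU by (metis fmeasurable.Un)
    have mUS: "measure lebesgue (U - S) < \<epsilon>"
      using U(3,4) \<epsilon> by (simp add: emeasure_eq_measure2 fmeasurableD2 ennreal_less_iff)
    have mU: "measure lebesgue U \<le> \<mu> + \<epsilon>"
    proof -
      have "measure lebesgue U \<le> measure lebesgue S + measure lebesgue (U - S)"
        using S U(3) USU by (metis measure_Un_le fmeasurableD)
      then show ?thesis using mUS by (simp add: \<mu>_def)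
    qed
    define K1 where "K1 = {i::real\<times>real. 0 < snd i \<and> cb i \<subseteq> U \<and> dg i < p * (2 * snd i)}"
    have r1: "\<And>i. i \<in> K1 \<Longrightarrow> 0 < snd i" by (simp add: K1_def)
    have cov1: "\<exists>i. i \<in> K1 \<and> x \<in> cball (fst i) (snd i) \<and> snd i < d" if x: "x \<in> S" and d: "0 < d" for x d
    proof -
      obtain \<delta> where \<delta>: "\<delta> > 0" "ball x \<delta> \<subseteq> U" using U x open_contains_ball by blast
      have "\<forall>e>0. \<exists>h. h \<noteq> 0 \<and> \<bar>h\<bar> < e \<and> (g (x+h) - g x)/h < p"
        using low[OF x] unfolding frequently_at by (simp add: dist_real_def)
      from this[rule_format, of "min \<delta> d"] \<delta> d obtain h where h: "h \<noteq> 0" "\<bar>h\<bar> < min \<delta> d" "(g (x+h) - g x)/h < p" by auto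
      have hd: "\<bar>h\<bar> < \<delta>" using h by simp
      note ic = interval_cover(1,2)[OF h(1) hd \<delta>(2)] interval_cover(3)[OF h(1) hd \<delta>(2), where g=g]
      have "2 * (\<bar>h\<bar>/2) * ((g (x+h) - g x)/h) < 2 * (\<bar>h\<bar>/2) * p"
        using h by (intro mult_strict_left_mono) auto
      then have "(x + h/2, \<bar>h\<bar>/2) \<in> K1"
        using ic h by (auto simp: K1_def cb_def dg_def algebra_simps)
      then show ?thesis using ic h by (intro exI[of _ "(x + h/2, \<bar>h\<bar>/2)"]) auto
    qed
    obtain C1 where C1: "countable C1" "C1 \<subseteq> K1"
      "pairwise (\<lambda>i j. disjnt (cball (fst i) (snd i)) (cball (fst j) (snd j))) C1"
      "negligible (S - (\<Union>i\<in>C1. cball (fst i) (snd i)))"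
      using Vitali_covering_theorem_cballs[of K1 snd S fst, OF r1 cov1] by blast
    obtain F1 where F1: "finite F1" "F1 \<subseteq> C1" "measure lebesgue (S - (\<Union>i\<in>F1. cb i)) < \<epsilon>"
      using countable_finite_approx[OF C1(1) S _ C1(4)[folded cb_def] \<epsilon>] cb_def by auto
    have F1K: "F1 \<subseteq> K1" using F1 C1 by auto
    define S' where "S' = S \<inter> (\<Union>i\<in>F1. ball (fst i) (snd i))"
    have S'l: "S' \<in> lmeasurable" unfolding S'_def
      using S F1(1) by (intro fmeasurable_Int_fmeasurable sets.finite_UN) auto
    define Z where "Z = (\<Union>i\<in>F1. sphere (fst i) (snd i))"
    have Zn: "negligible Z" unfolding Z_def using F1(1)
      by (intro negligible_Union) (auto simp: negligible_sphere)
    have mSS': "\<mu> \<le> measure lebesgue S' + \<epsilon>"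
    proof -
      have sub: "S \<subseteq> S' \<union> ((S - (\<Union>i\<in>F1. cb i)) \<union> Z)"
      proof (intro subsetI)
        fix x assume x: "x \<in> S"
        show "x \<in> S' \<union> ((S - (\<Union>i\<in>F1. cb i)) \<union> Z)"
        proof (cases "\<exists>i\<in>F1. x \<in> cb i")
          case True
          then obtain i where i: "i \<in> F1" "dist (fst i) x \<le> snd i" by (auto simp: cb_def)
          then have "x \<in> ball (fst i) (snd i) \<or> x \<in> sphere (fst i) (snd i)" by (auto simp: less_eq_real_def)
          then show ?thesis using x i(1) unfolding S'_def Z_def by blast
        next
          case False then show ?thesis using x by auto
        qed
      qed
      have l2: "S - (\<Union>i\<in>F1. cb i) \<in> lmeasurable" using S F1(1) by (auto simp: cb_def intro!: fmeasurable_Diff sets.finite_UN)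
      have l3: "Z \<in> lmeasurable" using Zn by (simp add: negligible_iff_measure)
      have "\<mu> \<le> measure lebesgue (S' \<union> ((S - (\<Union>i\<in>F1. cb i)) \<union> Z))"
        unfolding \<mu>_def using sub S'l l2 l3 S
        by (intro measure_mono_fmeasurable) (auto intro!: fmeasurable.Un fmeasurableD)
      also have "\<dots> \<le> measure lebesgue S' + measure lebesgue ((S - (\<Union>i\<in>F1. cb i)) \<union> Z)"
        using S'l l2 l3 by (intro measure_Un_le) (auto intro!: fmeasurable.Un fmeasurableD)
      also have "measure lebesgue ((S - (\<Union>i\<in>F1. cb i)) \<union> Z) \<le> measure lebesgue (S - (\<Union>i\<in>F1. cb i)) + measure lebesgue Z"
        using l2 l3 by (intro measure_Un_le) (auto intro!: fmeasurableD)
      also have "measure lebesgue Z = 0" using Zn by (simp add: negligible_iff_measure)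
      finally show ?thesis using F1(3) by simp
    qed
    define K2 where "K2 = {i::real\<times>real. 0 < snd i \<and> (\<exists>j\<in>F1. cb i \<subseteq> ball (fst j) (snd j)) \<and> q * (2 * snd i) < dg i}"
    have r2: "\<And>i. i \<in> K2 \<Longrightarrow> 0 < snd i" by (simp add: K2_def)
    have cov2: "\<exists>i. i \<in> K2 \<and> x \<in> cball (fst i) (snd i) \<and> snd i < d" if x: "x \<in> S'" and d: "0 < d" for x d
    proof -
      obtain j where j: "j \<in> F1" "x \<in> ball (fst j) (snd j)" using x by (auto simp: S'_def)
      obtain \<delta> where \<delta>: "\<delta> > 0" "ball x \<delta> \<subseteq> ball (fst j) (snd j)" using j open_contains_ball open_ball by blast
      have "\<forall>e>0. \<exists>h. h \<noteq> 0 \<and> \<bar>h\<bar> < e \<and> q < (g (x+h) - g x)/h"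
        using up[of x] x unfolding frequently_at by (simp add: dist_real_def S'_def)
      from this[rule_format, of "min \<delta> d"] \<delta> d obtain h where h: "h \<noteq> 0" "\<bar>h\<bar> < min \<delta> d" "q < (g (x+h) - g x)/h" by auto
      have hd: "\<bar>h\<bar> < \<delta>" using h by simp
      note ic = interval_cover(1,2)[OF h(1) hd \<delta>(2)] interval_cover(3)[OF h(1) hd \<delta>(2), where g=g]
      have "2 * (\<bar>h\<bar>/2) * q < 2 * (\<bar>h\<bar>/2) * ((g (x+h) - g x)/h)"
        using h by (intro mult_strict_left_mono) auto
      then have "(x + h/2, \<bar>h\<bar>/2) \<in> K2"
        using ic h j by (auto simp: K2_def cb_def dg_def algebra_simps)
      then show ?thesis using ic h by (intro exI[of _ "(x + h/2, \<bar>h\<bar>/2)"]) auto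
    qed
    obtain C2 where C2: "countable C2" "C2 \<subseteq> K2"
      "pairwise (\<lambda>i j. disjnt (cball (fst i) (snd i)) (cball (fst j) (snd j))) C2"
      "negligible (S' - (\<Union>i\<in>C2. cball (fst i) (snd i)))"
      using Vitali_covering_theorem_cballs[of K2 snd S' fst, OF r2 cov2] by blast
    obtain F2 where F2: "finite F2" "F2 \<subseteq> C2" "measure lebesgue (S' - (\<Union>i\<in>F2. cb i)) < \<epsilon>"
      using countable_finite_approx[OF C2(1) S'l _ C2(4)[folded cb_def] \<epsilon>] cb_def by auto
    have F2K: "F2 \<subseteq> K2" using F2 C2 by auto
    have A: "measure lebesgue S' \<le> (\<Sum>i\<in>F2. 2 * snd i) + \<epsilon>"
    proof -
      have l1: "(\<Union>i\<in>F2. cb i) \<in> lmeasurable" using F2(1) by (auto simp: cb_def intro!: fmeasurable.finite_UN)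
      have l2: "S' - (\<Union>i\<in>F2. cb i) \<in> lmeasurable" using S'l l1 by (auto intro!: fmeasurable_Diff fmeasurableD)
      have "measure lebesgue S' \<le> measure lebesgue ((\<Union>i\<in>F2. cb i) \<union> (S' - (\<Union>i\<in>F2. cb i)))"
        using S'l l1 l2 by (intro measure_mono_fmeasurable) (auto intro!: fmeasurable.Un fmeasurableD)
      also have "\<dots> \<le> measure lebesgue (\<Union>i\<in>F2. cb i) + measure lebesgue (S' - (\<Union>i\<in>F2. cb i))"
        using l1 l2 by (intro measure_Un_le) (auto intro!: fmeasurableD)
      also have "measure lebesgue (\<Union>i\<in>F2. cb i) \<le> (\<Sum>i\<in>F2. measure lebesgue (cb i))"
        using F2(1) by (intro measure_UNION_le) (auto simp: cb_def)
      also have "(\<Sum>i\<in>F2. measure lebesgue (cb i)) = (\<Sum>i\<in>F2. 2 * snd i)"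
        using F2K r2 by (intro sum.cong refl mcb) (auto simp: less_imp_le)
      finally show ?thesis using F2(3) by simp
    qed
    have B: "q * (\<Sum>i\<in>F2. 2 * snd i) \<le> (\<Sum>i\<in>F2. dg i)"
      unfolding sum_distrib_left using F2K by (intro sum_mono) (auto simp: K2_def less_imp_le)
    have disj_io: "disjoint_family_on io F"
      if F: "pairwise (\<lambda>i j. disjnt (cball (fst i) (snd i)) (cball (fst j) (snd j))) F"
        and pos: "\<And>i. i \<in> F \<Longrightarrow> 0 < snd i" for F
    proof (unfold disjoint_family_on_def, intro ballI impI)
      fix i j assume ij: "i \<in> F" "j \<in> F" "i \<noteq> j"
      then have "disjnt (cball (fst i) (snd i)) (cball (fst j) (snd j))" using F by (auto simp: pairwise_def)
      then have "fst i + snd i < fst j - snd j \<or> fst j + snd j < fst i - snd i"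
        using pos ij by (intro disjnt_cball_real) (auto simp: less_imp_le)
      then show "io i \<inter> io j = {}"
      proof
        assume "fst i + snd i < fst j - snd j"
        then have "g (fst i + snd i) \<le> g (fst j - snd j)" by (intro mono) simp
        then show ?thesis by (auto simp: io_def)
      next
        assume "fst j + snd j < fst i - snd i"
        then have "g (fst j + snd j) \<le> g (fst i - snd i)" by (intro mono) simp
        then show ?thesis by (auto simp: io_def)
      qed
    qed
    have C: "(\<Sum>i\<in>F2. dg i) = measure lebesgue (\<Union>i\<in>F2. io i)"
    proof -
      have "measure lebesgue (\<Union>i\<in>F2. io i) = (\<Sum>i\<in>F2. measure lebesgue (io i))"
      proof -
        have dF2: "disjoint_family_on io F2"
          using disj_io[OF pairwise_subset[OF C2(3) F2(2)]] F2K r2 by blast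
        have lio: "io i \<in> lmeasurable" for i by (simp add: io_def)
        show ?thesis
        proof (rule measure_finite_Union[OF F2(1) _ dF2])
          show "io ` F2 \<subseteq> sets lebesgue" using lio fmeasurableD by blast
          show "\<And>i. i \<in> F2 \<Longrightarrow> emeasure lebesgue (io i) \<noteq> \<infinity>" by (metis fmeasurableD2 lio infinity_ennreal_def)
        qed
      qed
      also have "\<dots> = (\<Sum>i\<in>F2. dg i)"
        using F2K r2 by (intro sum.cong refl mio) (auto simp: less_imp_le)
      finally show ?thesis by simp
    qed
    have D: "measure lebesgue (\<Union>i\<in>F2. io i) \<le> measure lebesgue (\<Union>i\<in>F1. io i)"
    proof (rule measure_mono_fmeasurable)
      show "(\<Union>i\<in>F2. io i) \<subseteq> (\<Union>i\<in>F1. io i)"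
      proof
        fix y assume "y \<in> (\<Union>i\<in>F2. io i)"
        then obtain i where i: "i \<in> F2" "y \<in> io i" by auto
        then obtain j where j: "j \<in> F1" "cb i \<subseteq> ball (fst j) (snd j)" and ri: "snd i > 0"
          using F2K by (auto simp: K2_def)
        have "fst i - snd i \<in> ball (fst j) (snd j)" "fst i + snd i \<in> ball (fst j) (snd j)"
          using j(2) ri by (auto simp: cb_def dist_real_def subset_iff)
        then have "fst j - snd j \<le> fst i - snd i" "fst i + snd i \<le> fst j + snd j"
          by (auto simp: dist_real_def)
        then have "g (fst j - snd j) \<le> g (fst i - snd i)" "g (fst i + snd i) \<le> g (fst j + snd j)"
          by (auto intro: mono)
        then have "y \<in> io j" using i(2) by (auto simp: io_def)
        then show "y \<in> (\<Union>i\<in>F1. io i)" using j by auto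
      qed
      show "(\<Union>i\<in>F2. io i) \<in> sets lebesgue" using F2(1) by (auto simp: io_def intro!: sets.finite_UN)
      show "(\<Union>i\<in>F1. io i) \<in> lmeasurable" using F1(1) by (auto simp: io_def intro!: fmeasurable.finite_UN)
    qed
    have E: "measure lebesgue (\<Union>i\<in>F1. io i) \<le> p * (\<mu> + \<epsilon>)"
    proof -
      have "measure lebesgue (\<Union>i\<in>F1. io i) \<le> (\<Sum>i\<in>F1. measure lebesgue (io i))"
        using F1(1) by (intro measure_UNION_le) (auto simp: io_def)
      also have "\<dots> = (\<Sum>i\<in>F1. dg i)"
        using F1K r1 by (intro sum.cong refl mio) (auto simp: less_imp_le)
      also have "\<dots> \<le> (\<Sum>i\<in>F1. p * (2 * snd i))"
        using F1K by (intro sum_mono) (auto simp: K1_def less_imp_le)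
      also have "\<dots> = p * (\<Sum>i\<in>F1. measure lebesgue (cb i))"
        unfolding sum_distrib_left using F1K r1 by (intro sum.cong refl) (auto simp: mcb less_imp_le)
      also have "(\<Sum>i\<in>F1. measure lebesgue (cb i)) = measure lebesgue (\<Union>i\<in>F1. cb i)"
      proof -
        have dF1: "disjoint_family_on cb F1" using pairwise_subset[OF C1(3) F1(2)]
          by (auto simp: cb_def disjoint_family_on_def pairwise_def disjnt_def)
        have lcb: "cb i \<in> lmeasurable" for i by (simp add: cb_def)
        have "measure lebesgue (\<Union>i\<in>F1. cb i) = (\<Sum>i\<in>F1. measure lebesgue (cb i))"
        proof (rule measure_finite_Union[OF F1(1) _ dF1])
          show "cb ` F1 \<subseteq> sets lebesgue" using lcb fmeasurableD by blast
          show "\<And>i. i \<in> F1 \<Longrightarrow> emeasure lebesgue (cb i) \<noteq> \<infinity>" by (metis fmeasurableD2 lcb infinity_ennreal_def)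
        qed
        then show ?thesis by simp
      qed
      also have "measure lebesgue (\<Union>i\<in>F1. cb i) \<le> measure lebesgue U"
        using F1K Ul F1(1) by (intro measure_mono_fmeasurable) (auto simp: K1_def cb_def intro!: sets.finite_UN)
      finally show ?thesis using mU p by (smt (verit) mult_left_mono)
    qed
    have "q * (\<Sum>i\<in>F2. 2 * snd i) \<le> p * (\<mu> + \<epsilon>)" using B C D E by linarith
    then have "(\<Sum>i\<in>F2. 2 * snd i) \<le> (p/q) * (\<mu> + \<epsilon>)"
      using q0 by (simp add: field_simps)
    then show ?thesis using A mSS' by linarith
  qed
  have pq1: "p/q < 1" "0 < p/q" using p by auto
  have "\<mu> \<le> (p/q) * \<mu>"
  proof (rule field_le_epsilon)
    fix e :: real assume e: "0 < e"
    define \<epsilon> where "\<epsilon> = e / (p/q + 2)"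
    have \<epsilon>0: "\<epsilon> > 0" using e pq1 by (simp add: \<epsilon>_def)
    have aux: "r*(\<mu>+e/(r+2)) + 2*(e/(r+2)) = r*\<mu> + e" if "0 < r" for r :: real
    proof -
      have "r + 2 \<noteq> 0" using that by simp
      have "r*(e/(r+2)) + 2*(e/(r+2)) = (r+2)*(e/(r+2))" by (simp only: distrib_right)
      also have "\<dots> = e" using \<open>r + 2 \<noteq> 0\<close> by simp
      finally have "r*(e/(r+2)) + 2*(e/(r+2)) = e" .
      then show ?thesis by (simp add: algebra_simps)
    qed
    have "(p/q)*(\<mu>+\<epsilon>) + 2*\<epsilon> = (p/q)*\<mu> + e"
      unfolding \<epsilon>_def using aux[OF pq1(2)] by simp
    then show "\<mu> \<le> (p/q) * \<mu> + e" using key[OF \<epsilon>0] by simp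
  qed
  then have "\<mu> * (1 - p/q) \<le> 0" by (simp add: algebra_simps)
  then have "\<mu> \<le> 0" using pq1 by (simp add: mult_le_0_iff)
  then show ?thesis using \<mu>0 unfolding \<mu>_def by linarith
qed

lemma conv_or_gap:
  fixes Q :: "real \<Rightarrow> real"
  assumes bnd: "\<forall>\<^sub>F h in at 0. 0 \<le> Q h \<and> Q h \<le> M"
    and nogap: "\<And>p q. p \<in> \<rat> \<Longrightarrow> q \<in> \<rat> \<Longrightarrow> p < q \<Longrightarrow>
                  \<not> ((\<exists>\<^sub>F h in at 0. Q h < p) \<and> (\<exists>\<^sub>F h in at 0. q < Q h))"
  shows "\<exists>D. (Q \<longlongrightarrow> D) (at 0)"
proof -
  define A where "A = Liminf (at (0::real)) (\<lambda>h. ereal (Q h))"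
  define B where "B = Limsup (at (0::real)) (\<lambda>h. ereal (Q h))"
  have Fnb: "(at (0::real)) \<noteq> bot" by simp
  have A0: "ereal 0 \<le> A" unfolding A_def
    by (rule Liminf_bounded) (use bnd in \<open>auto elim: eventually_mono\<close>)
  have BM: "B \<le> ereal M" unfolding B_def
    by (rule Limsup_bounded) (use bnd in \<open>auto elim: eventually_mono\<close>)
  have AB: "A \<le> B" unfolding A_def B_def by (rule Liminf_le_Limsup[OF Fnb])
  obtain a where a: "A = ereal a" using A0 AB BM by (cases A) auto
  obtain b where b: "B = ereal b" using A0 AB BM by (cases B) auto
  have "\<not> a < b"
  proof
    assume ab: "a < b"
    obtain p where p: "p \<in> \<rat>" "a < p" "p < b" using Rats_dense_in_real[OF ab] by blast
    obtain q where q: "q \<in> \<rat>" "p < q" "q < b" using Rats_dense_in_real[OF p(3)] by blast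
    have f1: "\<exists>\<^sub>F h in at 0. Q h < p"
    proof (rule ccontr)
      assume "\<not> (\<exists>\<^sub>F h in at 0. Q h < p)"
      then have "\<forall>\<^sub>F h in at 0. ereal p \<le> ereal (Q h)" by (simp add: not_frequently not_less)
      then have "ereal p \<le> A" unfolding A_def by (rule Liminf_bounded)
      then show False using a p by simp
    qed
    have f2: "\<exists>\<^sub>F h in at 0. q < Q h"
    proof (rule ccontr)
      assume "\<not> (\<exists>\<^sub>F h in at 0. q < Q h)"
      then have "\<forall>\<^sub>F h in at 0. ereal (Q h) \<le> ereal q" by (simp add: not_frequently not_less)
      then have "B \<le> ereal q" unfolding B_def by (rule Limsup_bounded)
      then show False using b q by simp
    qed
    show False using nogap[OF p(1) q(1) q(2)] f1 f2 by blast
  qed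
  then have "a = b" using AB a b by simp
  then have "((\<lambda>h. ereal (Q h)) \<longlongrightarrow> ereal a) (at 0)"
    using a b by (intro Liminf_eq_Limsup[OF Fnb]) (auto simp: A_def B_def)
  then show ?thesis by (auto simp: lim_ereal)
qed

lemma freq_at0_iff:
  "(\<exists>\<^sub>F h in at (0::real). P h) \<longleftrightarrow> (\<forall>n::nat. \<exists>h. h \<noteq> 0 \<and> \<bar>h\<bar> < inverse (real (Suc n)) \<and> P h)"
proof
  assume "\<exists>\<^sub>F h in at (0::real). P h"
  then show "\<forall>n::nat. \<exists>h. h \<noteq> 0 \<and> \<bar>h\<bar> < inverse (real (Suc n)) \<and> P h"
    unfolding frequently_at by (auto simp: dist_real_def)
next
  assume R: "\<forall>n::nat. \<exists>h. h \<noteq> 0 \<and> \<bar>h\<bar> < inverse (real (Suc n)) \<and> P h"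
  show "\<exists>\<^sub>F h in at (0::real). P h"
    unfolding frequently_at
  proof (intro allI impI)
    fix d :: real assume "0 < d"
    then obtain n where n: "inverse (real (Suc n)) < d" using reals_Archimedean by blast
    obtain h where "h \<noteq> 0" "\<bar>h\<bar> < inverse (real (Suc n))" "P h" using R by blast
    then show "\<exists>x\<in>UNIV. x \<noteq> 0 \<and> dist x 0 < d \<and> P x" using n by (auto simp: dist_real_def)
  qed
qed

lemma lipschitz_ae_diff:
  fixes f :: "real \<Rightarrow> real"
  assumes lip: "\<And>x y. \<bar>f x - f y\<bar> \<le> K * \<bar>x - y\<bar>"
  obtains N where "negligible N" "\<And>t. t \<notin> N \<Longrightarrow> f differentiable (at t)"
proof -
  have K0: "K \<ge> 0"
  proof -
    have "\<bar>f 1 - f 0\<bar> \<le> K" using lip[of 1 0] by simp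
    then show ?thesis by (meson abs_ge_zero order_trans)
  qed
  define g where "g t = f t + K * t" for t
  have mono: "g x \<le> g y" if "x \<le> y" for x y
  proof -
    have "\<bar>f x - f y\<bar> \<le> K * (y - x)" using lip[of x y] that by (simp add: abs_if split: if_splits)
    then show ?thesis unfolding g_def by (simp add: algebra_simps abs_le_iff)
  qed
  define Q where "Q t h = (g (t+h) - g t)/h" for t h
  have Qeq: "Q t h = (f (t+h) - f t)/h + K" if "h \<noteq> 0" for t h
    using that by (simp add: Q_def g_def field_simps)
  have Qb: "0 \<le> Q t h \<and> Q t h \<le> 2*K" if h: "h \<noteq> 0" for t h
  proof -
    have "\<bar>(f (t+h) - f t)/h\<bar> = \<bar>f (t+h) - f t\<bar> / \<bar>h\<bar>" by (simp add: abs_divide)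
    also have "\<dots> \<le> K * \<bar>h\<bar> / \<bar>h\<bar>" using lip[of "t+h" t] h by (intro divide_right_mono) auto
    also have "\<dots> = K" using h by simp
    finally have X: "\<bar>(f (t+h) - f t)/h\<bar> \<le> K" .
    have "(f (t+h) - f t)/h \<le> K" "- ((f (t+h) - f t)/h) \<le> K" using abs_le_D1[OF X] abs_le_D2[OF X] by auto
    then show ?thesis using Qeq[OF h, of t] by linarith
  qed
  have fc: "continuous_on UNIV f"
    by (rule lipschitz_on_continuous_on[of K]) (use K0 lip in \<open>auto intro!: lipschitz_onI simp: dist_real_def\<close>)
  have gc: "continuous_on UNIV g" unfolding g_def by (intro continuous_intros fc)
  have contQ: "continuous_on UNIV (\<lambda>t. Q t h)" if "h \<noteq> 0" for h
  proof -
    have "continuous_on UNIV (\<lambda>t. g (t + h))"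
      by (rule continuous_on_compose2[OF gc, of UNIV "\<lambda>t. t + h"]) (auto intro: continuous_intros)
    then show ?thesis unfolding Q_def using that by (intro continuous_intros gc) auto
  qed
  define E where "E p q = {t. (\<exists>\<^sub>F h in at 0. Q t h < p) \<and> (\<exists>\<^sub>F h in at 0. q < Q t h)}" for p q
  have Emeas: "E p q \<in> sets lebesgue" for p q
  proof -
    define A where "A n = (\<Union>h\<in>{h. h \<noteq> 0 \<and> \<bar>h\<bar> < inverse (real (Suc n))}. {t. Q t h < p})" for n :: nat
    define B where "B n = (\<Union>h\<in>{h. h \<noteq> 0 \<and> \<bar>h\<bar> < inverse (real (Suc n))}. {t. q < Q t h})" for n :: nat
    have oA: "open {t. Q t h < p}" if "h \<noteq> 0" for h
      by (rule open_Collect_less[OF contQ[OF that] continuous_on_const])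
    have oB: "open {t. q < Q t h}" if "h \<noteq> 0" for h
      by (rule open_Collect_less[OF continuous_on_const contQ[OF that]])
    have "open (A n)" for n unfolding A_def
      by (rule open_UN) (use oA in auto)
    moreover have "open (B n)" for n unfolding B_def
      by (rule open_UN) (use oB in auto)
    moreover have "E p q = (\<Inter>n. A n) \<inter> (\<Inter>n. B n)"
      unfolding E_def A_def B_def by (auto simp: freq_at0_iff)
    ultimately show ?thesis by auto
  qed
  have Eneg: "negligible (E p q \<inter> {- real n<..<real n})" if pq: "p < q" for p q n
  proof (cases "p > 0")
    case False
    have "E p q = {}"
    proof -
      have "\<not> (\<exists>\<^sub>F h in at 0. Q t h < p)" for t
      proof -
        have "\<forall>\<^sub>F h in at (0::real). h \<noteq> 0" by (simp add: eventually_at_filter)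
        then have "\<forall>\<^sub>F h in at (0::real). \<not> Q t h < p"
        proof (rule eventually_mono)
          fix h :: real assume "h \<noteq> 0"
          then have "0 \<le> Q t h" using Qb by blast
          then show "\<not> Q t h < p" using False by linarith
        qed
        then show ?thesis by (simp add: not_frequently)
      qed
      then show ?thesis unfolding E_def by auto
    qed
    then show ?thesis by simp
  next
    case True
    let ?S = "E p q \<inter> {- real n<..<real n}"
    have Sl: "?S \<in> lmeasurable"
    proof -
      have "{- real n<..<real n} \<inter> E p q \<in> lmeasurable"
        by (rule fmeasurable_Int_fmeasurable) (simp_all add: Emeas)
      then show ?thesis by (simp add: Int_commute)
    qed
    have "measure lebesgue ?S = 0"
    proof (rule vitali_core[of g ?S p q])
      show "\<And>x y. x \<le> y \<Longrightarrow> g x \<le> g y" by (rule mono)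
    qed (use Sl True pq in \<open>auto simp: E_def Q_def\<close>)
    then show ?thesis using Sl by (simp add: negligible_iff_measure)
  qed
  define I where "I = {pq :: real \<times> real. fst pq \<in> \<rat> \<and> snd pq \<in> \<rat> \<and> fst pq < snd pq} \<times> (UNIV :: nat set)"
  define Fam where "Fam i = E (fst (fst i)) (snd (fst i)) \<inter> {- real (snd i)<..<real (snd i)}" for i
  define N where "N = \<Union> (Fam ` I)"
  have cI: "countable I"
  proof -
    have "{pq :: real \<times> real. fst pq \<in> \<rat> \<and> snd pq \<in> \<rat> \<and> fst pq < snd pq} \<subseteq> \<rat> \<times> \<rat>" by auto
    then have "countable {pq :: real \<times> real. fst pq \<in> \<rat> \<and> snd pq \<in> \<rat> \<and> fst pq < snd pq}"
      by (rule countable_subset) (intro countable_SIGMA countable_rat)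
    then show ?thesis unfolding I_def by (intro countable_SIGMA) auto
  qed
  have Nneg: "negligible N" unfolding N_def
  proof (rule negligible_countable_Union)
    show "countable (Fam ` I)" using cI by simp
    fix S assume "S \<in> Fam ` I"
    then obtain i where i: "i \<in> I" "S = Fam i" by blast
    then have "fst (fst i) < snd (fst i)" by (auto simp: I_def)
    then show "negligible S" unfolding i(2) Fam_def by (rule Eneg)
  qed
  have "f differentiable (at t)" if t: "t \<notin> N" for t
  proof -
    have bnd: "\<forall>\<^sub>F h in at 0. 0 \<le> Q t h \<and> Q t h \<le> 2*K"
    proof -
      have "\<forall>\<^sub>F h in at (0::real). h \<noteq> 0" by (simp add: eventually_at_filter)
      then show ?thesis by eventually_elim (use Qb in auto)
    qed
    have nogap: "\<not> ((\<exists>\<^sub>F h in at 0. Q t h < p) \<and> (\<exists>\<^sub>F h in at 0. q < Q t h))"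
      if pq: "p \<in> \<rat>" "q \<in> \<rat>" "p < q" for p q
    proof
      assume fr: "(\<exists>\<^sub>F h in at 0. Q t h < p) \<and> (\<exists>\<^sub>F h in at 0. q < Q t h)"
      obtain n where n: "\<bar>t\<bar> < real n" using reals_Archimedean2 by blast
      have "((p,q),n) \<in> I" using pq by (simp add: I_def)
      moreover have "t \<in> Fam ((p,q),n)" using fr n by (auto simp: Fam_def E_def)
      ultimately show False using t unfolding N_def by blast
    qed
    obtain D where D: "((\<lambda>h. Q t h) \<longlongrightarrow> D) (at 0)" using conv_or_gap[OF bnd nogap] by blast
    then have "(g has_field_derivative D) (at t)" unfolding DERIV_def Q_def by simp
    then have "((\<lambda>x. g x - K * x) has_field_derivative D - K) (at t)"
      by (auto intro!: derivative_eq_intros)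
    moreover have "(\<lambda>x. g x - K * x) = f" by (auto simp: g_def)
    ultimately show ?thesis using real_differentiable_def by auto
  qed
  then show ?thesis using that Nneg by blast
qed

lemma vec3_inner: "(x::real^3) \<bullet> y = x$1*y$1 + x$2*y$2 + x$3*y$3"
  by (simp add: inner_vec_def sum_3)

lemma vec3_norm2: "(norm (x::real^3))^2 = (x$1)^2 + (x$2)^2 + (x$3)^2"
proof -
  have "(norm x)^2 = x \<bullet> x" by (rule power2_norm_eq_inner)
  also have "\<dots> = (x$1)^2 + (x$2)^2 + (x$3)^2" by (simp add: vec3_inner power2_eq_square)
  finally show ?thesis .
qed

lemma geom:
  fixes h :: "real \<times> real \<Rightarrow> real^3" and f1 f3 :: "real \<Rightarrow> real"
  assumes Lpos: "L > 0" and bilip: "bi_lipschitz_on L sqQ h"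
    and th: "0 < \<theta>" "\<theta> < pi/2" and eps: "\<epsilon> > 0"
    and nontang: "\<forall>w\<in>h ` sqQ. \<forall>z\<in>h ` sqQ. w \<noteq> z \<and> dist w z \<le> \<epsilon> \<longrightarrow> acute_line_angle z w > \<theta>"
    and diag1: "\<forall>t\<in>{-1..1}. h (t, t) $ 1 = h (t, t) $ 2"
    and mpos: "m > 0" and mle: "\<forall>x\<in>sqQ. m \<le> norm (h x)"
    and s0: "-1 < s0" "s0 < 1"
    and f1: "\<forall>t\<in>{-1<..<1}. f1 t = h (t,t) $ 1" and f3: "\<forall>t\<in>{-1<..<1}. f3 t = h (t,t) $ 3"
    and D1: "(f1 has_real_derivative d1) (at s0)" and D3: "(f3 has_real_derivative d3) (at s0)"
  shows "sin \<theta> * m / L \<le> \<bar>f3 s0 * d1 - f1 s0 * d3\<bar>"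
proof -
  define P where "P = h (s0, s0)"
  define a where "a = P$1"
  define c where "c = P$3"
  have Pa: "P$1 = a" "P$3 = c" by (simp_all add: a_def c_def)
  have P2: "P$2 = a" using diag1 s0 by (auto simp: P_def a_def)
  have f1s: "f1 s0 = a" "f3 s0 = c" using f1 f3 s0 by (auto simp: a_def c_def P_def)
  have sqQ_diag: "(t,t) \<in> sqQ" if "-1 \<le> t" "t \<le> 1" for t using that by (simp add: sqQ_def)
  have nP: "norm P \<ge> m" using mle sqQ_diag[of s0] s0 by (auto simp: P_def)
  have nP2: "(norm P)^2 = 2*a^2 + c^2" using P2 by (simp add: vec3_norm2 Pa)
  define u where "u t = (f1 (s0 + t) - f1 s0)/t" for t
  define vv where "vv t = (f3 (s0 + t) - f3 s0)/t" for t
  have U: "(u \<longlongrightarrow> d1) (at 0)" using D1 by (simp add: DERIV_def u_def[abs_def])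
  have V: "(vv \<longlongrightarrow> d3) (at 0)" using D3 by (simp add: DERIV_def vv_def[abs_def])
  define \<delta> where "\<delta> = min (min (1 - s0) (1 + s0)) (\<epsilon>/(2*L))"
  have \<delta>0: "\<delta> > 0" using s0 eps Lpos by (simp add: \<delta>_def)
  have ev: "\<forall>\<^sub>F t in at (0::real). t \<noteq> 0 \<and> \<bar>t\<bar> < \<delta>"
    unfolding eventually_at using \<delta>0 by (auto intro!: exI[of _ \<delta>] simp: dist_real_def)
  have sq2: "sqrt 2 \<le> 2"
  proof -
    have "sqrt 2 \<le> sqrt (2^2)" by (subst real_sqrt_le_iff) simp
    then show ?thesis by simp
  qed
  have pointwise: "2/L^2 \<le> 2*(u t)^2 + (vv t)^2 \<and>
      (2*a*u t + c* vv t)^2 \<le> (cos \<theta>)^2 * (norm P)^2 * (2*(u t)^2 + (vv t)^2)"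
    if t: "t \<noteq> 0" "\<bar>t\<bar> < \<delta>" for t
  proof -
    have st: "-1 < s0 + t" "s0 + t < 1" using t s0 by (auto simp: \<delta>_def)
    have te: "\<bar>t\<bar> < \<epsilon>/(2*L)" using t by (simp add: \<delta>_def)
    define W where "W = h (s0+t, s0+t)"
    define \<Delta> where "\<Delta> = W - P"
    have fW: "f1 (s0+t) = W$1" "f3 (s0+t) = W$3" using f1 f3 st by (simp_all add: W_def)
    have W2: "W$2 = W$1" using diag1 st by (simp add: W_def)
    have tu: "t * u t = f1 (s0 + t) - f1 s0" using t by (simp add: u_def)
    have tv: "t * vv t = f3 (s0 + t) - f3 s0" using t by (simp add: vv_def)
    have \<Delta>1: "\<Delta>$1 = t * u t" using tu fW f1s Pa by (simp add: \<Delta>_def)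
    have \<Delta>2: "\<Delta>$2 = t * u t" using tu fW f1s Pa P2 W2 by (simp add: \<Delta>_def)
    have \<Delta>3: "\<Delta>$3 = t * vv t" using tv fW f1s Pa by (simp add: \<Delta>_def)
    have nD2: "(norm \<Delta>)^2 = t^2 * (2*(u t)^2 + (vv t)^2)"
      by (simp add: vec3_norm2 \<Delta>1 \<Delta>2 \<Delta>3 power_mult_distrib algebra_simps)
    have ip: "P \<bullet> \<Delta> = t * (2*a*u t + c* vv t)"
      by (simp add: vec3_inner \<Delta>1 \<Delta>2 \<Delta>3 P2 Pa algebra_simps)
    have inQ: "(s0+t, s0+t) \<in> sqQ" "(s0,s0) \<in> sqQ" using st s0 by (auto intro!: sqQ_diag)
    have "dist (s0+t, s0+t) (s0, s0) = sqrt (2 * t^2)"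
      by (simp add: dist_Pair_Pair dist_real_def)
    also have "\<dots> = sqrt 2 * \<bar>t\<bar>" by (simp add: real_sqrt_mult)
    finally have dpts: "dist (s0+t, s0+t) (s0, s0) = sqrt 2 * \<bar>t\<bar>" .
    have bl: "dist (s0+t, s0+t) (s0, s0) / L \<le> dist W P" "dist W P \<le> L * dist (s0+t, s0+t) (s0, s0)"
      using bilip inQ unfolding bi_lipschitz_on_def W_def P_def by blast+
    have dWP: "dist W P = norm \<Delta>" by (simp add: dist_norm \<Delta>_def)
    have lowpos: "0 < sqrt 2 * \<bar>t\<bar> / L" using t Lpos by simp
    have low: "sqrt 2 * \<bar>t\<bar> / L \<le> norm \<Delta>" using bl(1) dpts dWP by simp
    have "(sqrt 2 * \<bar>t\<bar> / L)^2 \<le> (norm \<Delta>)^2"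
      using low lowpos by (intro power_mono) auto
    moreover have "(sqrt 2 * \<bar>t\<bar> / L)^2 = t^2 * (2/L^2)"
      by (simp add: power_divide power_mult_distrib)
    ultimately have H: "t^2 * (2/L^2) \<le> t^2 * (2*(u t)^2 + (vv t)^2)" using nD2 by linarith
    have t2: "0 < t^2" using t by simp
    have F1: "2/L^2 \<le> 2*(u t)^2 + (vv t)^2" using H t2 by (metis mult_le_cancel_left_pos)
    have WP: "W \<noteq> P" using low lowpos dWP by auto
    have "dist W P \<le> L * (sqrt 2 * \<bar>t\<bar>)" using bl(2) dpts by simp
    also have "\<dots> \<le> L * (2 * \<bar>t\<bar>)" using sq2 Lpos by (intro mult_left_mono mult_right_mono) auto
    also have "\<dots> \<le> \<epsilon>" using te Lpos by (simp add: field_simps)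
    finally have dle: "dist W P \<le> \<epsilon>" .
    have Wi: "W \<in> h ` sqQ" "P \<in> h ` sqQ" using inQ by (auto simp: W_def P_def)
    have "acute_line_angle P W > \<theta>" using nontang Wi WP dle by blast
    then have ang: "\<theta> < arccos (\<bar>P \<bullet> \<Delta>\<bar> / (norm P * norm \<Delta>))"
      by (simp add: acute_line_angle_def \<Delta>_def)
    have nPpos: "norm P > 0" using nP mpos by linarith
    have nDpos: "norm \<Delta> > 0" using low lowpos by linarith
    define r where "r = \<bar>P \<bullet> \<Delta>\<bar> / (norm P * norm \<Delta>)"
    have r0: "0 \<le> r" by (simp add: r_def)
    have r1: "r \<le> 1" unfolding r_def using nPpos nDpos Cauchy_Schwarz_ineq2[of P \<Delta>]
      by (simp add: divide_le_eq_1)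
    have "cos (arccos r) < cos \<theta>"
      using ang th r0 r1 unfolding r_def[symmetric]
      by (intro cos_monotone_0_pi) (auto intro!: arccos_ubound)
    then have "r < cos \<theta>" using r0 r1 by (simp add: cos_arccos)
    then have "\<bar>P \<bullet> \<Delta>\<bar> < cos \<theta> * (norm P * norm \<Delta>)"
      using nPpos nDpos by (simp add: r_def pos_divide_less_eq)
    then have "\<bar>P \<bullet> \<Delta>\<bar>^2 \<le> (cos \<theta> * (norm P * norm \<Delta>))^2"
      by (intro power_mono) auto
    then have PD: "(P \<bullet> \<Delta>)^2 \<le> (cos \<theta>)^2 * (norm P)^2 * (norm \<Delta>)^2"
      by (simp add: power_mult_distrib)
    have "t^2 * (2*a*u t + c* vv t)^2 \<le> t^2 * ((cos \<theta>)^2 * (norm P)^2 * (2*(u t)^2 + (vv t)^2))"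
    proof -
      have e1: "(P \<bullet> \<Delta>)^2 = t^2 * (2*a*u t + c* vv t)^2" unfolding ip by (rule power_mult_distrib)
      have e2: "(cos \<theta>)^2 * (norm P)^2 * (norm \<Delta>)^2 = t^2 * ((cos \<theta>)^2 * (norm P)^2 * (2*(u t)^2 + (vv t)^2))"
        unfolding nD2 by (simp add: algebra_simps)
      show ?thesis using PD e1 e2 by linarith
    qed
    then have F2: "(2*a*u t + c* vv t)^2 \<le> (cos \<theta>)^2 * (norm P)^2 * (2*(u t)^2 + (vv t)^2)"
      using t2 by (metis mult_le_cancel_left_pos)
    show ?thesis using F1 F2 by simp
  qed
  define S where "S = 2*d1^2 + d3^2"
  have L1lim: "((\<lambda>t. 2*(u t)^2 + (vv t)^2) \<longlongrightarrow> S) (at 0)"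
    unfolding S_def by (intro tendsto_intros U V)
  have L2lim: "((\<lambda>t. (cos \<theta>)^2 * (norm P)^2 * (2*(u t)^2 + (vv t)^2) - (2*a*u t + c* vv t)^2)
      \<longlongrightarrow> (cos \<theta>)^2 * (norm P)^2 * S - (2*a*d1 + c*d3)^2) (at 0)"
    unfolding S_def by (intro tendsto_intros U V)
  have A: "2/L^2 \<le> S"
  proof (rule tendsto_lowerbound[OF L1lim])
    show "\<forall>\<^sub>F t in at 0. 2/L^2 \<le> 2*(u t)^2 + (vv t)^2"
      using ev by eventually_elim (use pointwise in blast)
  qed simp
  have B: "0 \<le> (cos \<theta>)^2 * (norm P)^2 * S - (2*a*d1 + c*d3)^2"
  proof (rule tendsto_lowerbound[OF L2lim])
    show "\<forall>\<^sub>F t in at 0. 0 \<le> (cos \<theta>)^2 * (norm P)^2 * (2*(u t)^2 + (vv t)^2) - (2*a*u t + c* vv t)^2"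
      using ev by eventually_elim (use pointwise in auto)
  qed simp
  define X where "X = c*d1 - a*d3"
  have id: "(norm P)^2 * S - (2*a*d1 + c*d3)^2 = 2 * X^2"
    unfolding nP2 S_def X_def by (simp add: power2_eq_square algebra_simps)
  have m2: "m^2 \<le> (norm P)^2" using nP mpos by (intro power_mono) auto
  have s2: "(sin \<theta>)^2 * (m^2 * (2/L^2)) \<le> (sin \<theta>)^2 * ((norm P)^2 * S)"
    using m2 A by (intro mult_left_mono mult_mono) auto
  have sc: "(sin \<theta>)^2 = 1 - (cos \<theta>)^2" by (simp add: sin_squared_eq)
  have "(sin \<theta>)^2 * ((norm P)^2 * S) = (norm P)^2 * S - (cos \<theta>)^2 * (norm P)^2 * S"
    unfolding sc by (simp add: algebra_simps)
  then have "(sin \<theta>)^2 * (m^2 * (2/L^2)) \<le> 2 * X^2" using s2 B id by linarith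
  moreover have "(sin \<theta> * m / L)^2 * 2 = (sin \<theta>)^2 * (m^2 * (2/L^2))"
    by (simp add: power_divide power_mult_distrib)
  ultimately have "(sin \<theta> * m / L)^2 \<le> \<bar>X\<bar>^2" by simp
  then have "sin \<theta> * m / L \<le> \<bar>X\<bar>" by (rule power2_le_imp_le) simp
  then show ?thesis using f1s by (simp add: X_def)
qed

lemma local_deriv:
  fixes g1 g3 :: "real \<Rightarrow> real" and G :: "complex \<Rightarrow> complex"
  assumes d1: "(g1 has_real_derivative d1) (at (\<sigma> * Im z0 + \<beta>))"
    and d3: "(g3 has_real_derivative d3) (at (\<sigma> * Im z0 + \<beta>))"
    and V: "open V" "z0 \<in> V"
    and eq: "\<And>z. z \<in> V \<Longrightarrow> G z = complex_of_real (exp (lam * Re z)) *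
                  Complex (g3 (\<sigma> * Im z + \<beta>)) (g1 (\<sigma> * Im z + \<beta>))"
  shows "G differentiable (at z0) \<and>
    jac_det G z0 = \<sigma> * lam * (exp (lam * Re z0))^2 *
       (g3 (\<sigma> * Im z0 + \<beta>) * d1 - g1 (\<sigma> * Im z0 + \<beta>) * d3)"
proof -
  define s where "s = \<sigma> * Im z0 + \<beta>"
  define E where "E = exp (lam * Re z0)"
  have inner: "((\<lambda>z. \<sigma> * Im z + \<beta>) has_derivative (\<lambda>w. \<sigma> * Im w)) (at z0)"
    by (intro derivative_eq_intros) auto
  have h3: "((\<lambda>z. g3 (\<sigma> * Im z + \<beta>)) has_derivative (\<lambda>w. d3 * (\<sigma> * Im w))) (at z0)"
    using has_derivative_compose[OF inner has_field_derivative_imp_has_derivative[OF d3]] by simp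
  have h1: "((\<lambda>z. g1 (\<sigma> * Im z + \<beta>)) has_derivative (\<lambda>w. d1 * (\<sigma> * Im w))) (at z0)"
    using has_derivative_compose[OF inner has_field_derivative_imp_has_derivative[OF d1]] by simp
  have inner2: "((\<lambda>z. lam * Re z) has_derivative (\<lambda>w. lam * Re w)) (at z0)"
    by (intro derivative_eq_intros) auto
  have he: "((\<lambda>z. exp (lam * Re z)) has_derivative (\<lambda>w. exp (lam * Re z0) * (lam * Re w))) (at z0)"
    using has_derivative_compose[OF inner2 has_field_derivative_imp_has_derivative[OF DERIV_exp]] by simp
  have H3: "((\<lambda>z. complex_of_real (g3 (\<sigma> * Im z + \<beta>))) has_derivative (\<lambda>w. complex_of_real (d3 * (\<sigma> * Im w)))) (at z0)"
    by (rule has_derivative_of_real[OF h3])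
  have H1: "((\<lambda>z. \<i> * complex_of_real (g1 (\<sigma> * Im z + \<beta>))) has_derivative (\<lambda>w. \<i> * complex_of_real (d1 * (\<sigma> * Im w)))) (at z0)"
    by (rule has_derivative_mult_right[OF has_derivative_of_real[OF h1]])
  have HE: "((\<lambda>z. complex_of_real (exp (lam * Re z))) has_derivative (\<lambda>w. complex_of_real (exp (lam * Re z0) * (lam * Re w)))) (at z0)"
    by (rule has_derivative_of_real[OF he])
  define D where "D w = complex_of_real (exp (lam * Re z0)) *
      (complex_of_real (d3 * (\<sigma> * Im w)) + \<i> * complex_of_real (d1 * (\<sigma> * Im w))) +
      complex_of_real (exp (lam * Re z0) * (lam * Re w)) *
      (complex_of_real (g3 (\<sigma> * Im z0 + \<beta>)) + \<i> * complex_of_real (g1 (\<sigma> * Im z0 + \<beta>)))" for w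
  have FD: "((\<lambda>z. complex_of_real (exp (lam * Re z)) *
      (complex_of_real (g3 (\<sigma> * Im z + \<beta>)) + \<i> * complex_of_real (g1 (\<sigma> * Im z + \<beta>)))) has_derivative D) (at z0)"
    unfolding D_def[abs_def] by (rule has_derivative_mult[OF HE has_derivative_add[OF H3 H1]])
  have GD: "(G has_derivative D) (at z0)"
  proof (rule has_derivative_transform_within_open[OF FD V])
    fix z assume "z \<in> V"
    then show "complex_of_real (exp (lam * Re z)) *
      (complex_of_real (g3 (\<sigma> * Im z + \<beta>)) + \<i> * complex_of_real (g1 (\<sigma> * Im z + \<beta>))) = G z"
      using eq by (simp add: Complex_eq)
  qed
  have fd: "frechet_derivative G (at z0) = D" using frechet_derivative_at[OF GD] by simp
  have D1: "D 1 = complex_of_real (E * lam) * Complex (g3 s) (g1 s)"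
    by (simp add: D_def E_def s_def Complex_eq algebra_simps)
  have Di: "D \<i> = complex_of_real (E * \<sigma>) * Complex d3 d1"
    by (simp add: D_def E_def Complex_eq algebra_simps)
  have "jac_det G z0 = Re (D 1) * Im (D \<i>) - Im (D 1) * Re (D \<i>)"
    by (simp add: jac_det_def fd Let_def)
  also have "\<dots> = \<sigma> * lam * E^2 * (g3 s * d1 - g1 s * d3)"
    unfolding D1 Di by (simp add: power2_eq_square algebra_simps)
  finally show ?thesis using GD by (auto simp: differentiable_def E_def s_def)
qed

lemma negligible_Im_preimage:
  assumes N: "negligible (N::real set)"
  shows "negligible {z::complex. Im z \<in> N}"
proof -
  have "N \<in> null_sets (completion lborel)" using N by (simp add: negligible_iff_null_sets)
  then obtain N' where N': "N' \<in> null_sets lborel" "N \<subseteq> N'"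
    by (auto simp: null_sets_completion_iff2)
  have "UNIV \<times> N' \<in> null_sets (lborel \<Otimes>\<^sub>M lborel)"
    by (rule lborel.times_in_null_sets2) (use N' in auto)
  then have "UNIV \<times> N' \<in> null_sets (lborel :: (real \<times> real) measure)"
    by (simp add: lborel_prod)
  then have "UNIV \<times> N' \<in> null_sets (completion (lborel :: (real \<times> real) measure))"
    by (rule null_sets_completionI)
  then have negT: "negligible (UNIV \<times> N' :: (real \<times> real) set)" by (simp add: negligible_iff_null_sets)
  define f where "f p = Complex (fst p) (snd p)" for p :: "real \<times> real"
  have fd: "f differentiable_on (UNIV \<times> N')"
  proof -
    have "linear f" by (rule linearI) (auto simp: f_def complex_eq_iff)
    then show ?thesis by (rule linear_imp_differentiable_on)
  qed
  have "negligible (f ` (UNIV \<times> N'))"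
    by (rule negligible_differentiable_image_negligible[OF _ negT fd]) simp
  moreover have "{z::complex. Im z \<in> N} \<subseteq> f ` (UNIV \<times> N')"
  proof
    fix z :: complex assume "z \<in> {z. Im z \<in> N}"
    then have "(Re z, Im z) \<in> UNIV \<times> N'" using N' by auto
    moreover have "z = f (Re z, Im z)" by (simp add: f_def)
    ultimately show "z \<in> f ` (UNIV \<times> N')" by blast
  qed
  ultimately show ?thesis by (rule negligible_subset)
qed

lemma negligible_affine_image:
  assumes "negligible (N::real set)"
  shows "negligible ((\<lambda>t. a + b * t) ` N)"
proof (rule negligible_differentiable_image_negligible[OF _ assms])
  show "(\<lambda>t. a + b * t) differentiable_on N" by (auto intro!: derivative_intros)
qed simp

lemma negligible_imp_AE:
  fixes B :: "'a::euclidean_space set"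
  assumes "negligible B" "\<And>z. z \<notin> B \<Longrightarrow> P z"
  shows "AE z in lborel. P z"
proof -
  have "B \<in> null_sets (completion lborel)" using assms(1) by (simp add: negligible_iff_null_sets)
  then obtain B' where B': "B' \<in> null_sets lborel" "B \<subseteq> B'"
    by (auto simp: null_sets_completion_iff2)
  show ?thesis by (rule AE_I'[OF B'(1)]) (use assms(2) B'(2) in auto)
qed

lemma floor_k:
  assumes "4 * real_of_int k - 1 \<le> y" "y < 4 * real_of_int k + 3"
  shows "\<lfloor>(y + 1)/4\<rfloor> = k"
  using assms by (simp add: floor_eq_iff field_simps)

lemma ghat_strip_eval:
  "\<lfloor>(Im w + 1)/4\<rfloor> = k \<Longrightarrow> ghat_strip h lam w = complex_of_real (exp (lam * Re w)) *
     Complex (h (Im w - 4 * real_of_int k, Im w - 4 * real_of_int k) $ 3) (h (Im w - 4 * real_of_int k, Im w - 4 * real_of_int k) $ 1)"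
  by (simp add: ghat_strip_def Let_def)

lemma final_arith:
  fixes L lam A X sm :: real
  assumes "0 < L" "0 \<le> lam" "0 \<le> A" "0 \<le> sm" "sm / L \<le> X"
  shows "sm * lam * A / (2 * L) \<le> lam * A * X"
proof -
  have "sm * lam * A / (2 * L) = (lam * A) * (sm / L) / 2" by (simp add: field_simps)
  also have "\<dots> \<le> (lam * A) * (sm / L)"
  proof -
    have "0 \<le> (lam * A) * (sm / L)" using assms by (intro mult_nonneg_nonneg divide_nonneg_pos) auto
    moreover have "\<And>x::real. 0 \<le> x \<Longrightarrow> x / 2 \<le> x" by simp
    ultimately show ?thesis by blast
  qed
  also have "\<dots> \<le> (lam * A) * X" using assms by (intro mult_left_mono) auto
  finally show ?thesis by simp
qed

theorem lemma7p1:
  fixes h :: "real \<times> real \<Rightarrow> real^3" and L \<theta> \<epsilon> lam :: real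
  assumes L_pos: "L > 0"
    and bilip: "bi_lipschitz_on L sqQ h"
    and sense: "sense_preserving_surf h"
    and upper: "\<forall>x\<in>sqQ. h x $ 3 \<ge> 0"
    and bdry: "\<forall>x\<in>frontier sqQ. h x $ 3 = 0"
    and ray: "\<forall>x\<in>sqQ. \<forall>y\<in>sqQ. \<forall>r::real. r \<ge> 0 \<and> h y = r *\<^sub>R h x \<longrightarrow> h y = h x"
    and theta: "0 < \<theta>" "\<theta> < pi / 2" "\<epsilon> > 0"
    and nontang: "\<forall>w\<in>h ` sqQ. \<forall>z\<in>h ` sqQ. w \<noteq> z \<and> dist w z \<le> \<epsilon> \<longrightarrow>
                     acute_line_angle z w > \<theta>"
    and minpos: "(INF x\<in>sqQ. norm (h x)) > 0"
    and diag1: "\<forall>t\<in>{-1..1}. h (t, t) $ 1 = h (t, t) $ 2"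
    and diag2: "\<forall>t\<in>{-1..1}. h (t, -t) $ 1 = - h (t, -t) $ 2"
    and center: "h (0, 0) = vector [0, 0, 1]"
    and supnorm: "(SUP x\<in>sqQ. norm (h x)) = 1"
    and lam: "lam \<ge> 1"
  shows "AE z in lborel. ghat h lam differentiable (at z) \<and>
           \<bar>jac_det (ghat h lam) z\<bar> \<ge>
             sin \<theta> * (INF x\<in>sqQ. norm (h x)) * lam * exp (2 * lam * Re z) / (2 * L)"
proof -
  define m where "m = (INF x\<in>sqQ. norm (h x))"
  have mpos: "m > 0" using minpos by (simp add: m_def)
  have mle: "\<forall>x\<in>sqQ. m \<le> norm (h x)"
    unfolding m_def by (auto intro!: cINF_lower bdd_belowI2[where m=0])
  define cl where "cl t = max (-1) (min 1 t)" for t :: real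
  have cl_in: "-1 \<le> cl t" "cl t \<le> 1" for t by (auto simp: cl_def)
  have cl_id: "cl t = t" if "-1 \<le> t" "t \<le> 1" for t using that by (auto simp: cl_def)
  have cl_lip: "\<bar>cl x - cl y\<bar> \<le> \<bar>x - y\<bar>" for x y by (auto simp: cl_def max_def min_def abs_if)
  have sqQ_diag: "(t,t) \<in> sqQ" if "-1 \<le> t" "t \<le> 1" for t using that by (simp add: sqQ_def)
  have sq2: "sqrt 2 \<le> 2"
  proof -
    have "sqrt 2 \<le> sqrt (2^2)" by (subst real_sqrt_le_iff) simp
    then show ?thesis by simp
  qed
  have lipc: "\<bar>h (cl x, cl x) $ i - h (cl y, cl y) $ i\<bar> \<le> (2*L) * \<bar>x - y\<bar>" for x y i
  proof -
    have "\<bar>h (cl x, cl x) $ i - h (cl y, cl y) $ i\<bar> = \<bar>(h (cl x, cl x) - h (cl y, cl y)) $ i\<bar>" by simp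
    also have "\<dots> \<le> norm (h (cl x, cl x) - h (cl y, cl y))" by (rule component_le_norm_cart)
    also have "\<dots> = dist (h (cl x, cl x)) (h (cl y, cl y))" by (simp add: dist_norm)
    also have "\<dots> \<le> L * dist (cl x, cl x) (cl y, cl y)"
      using bilip sqQ_diag[OF cl_in(1,2)] unfolding bi_lipschitz_on_def by blast
    also have "dist (cl x, cl x) (cl y, cl y) = sqrt 2 * \<bar>cl x - cl y\<bar>"
    proof -
      have "dist (cl x, cl x) (cl y, cl y) = sqrt (2 * (cl x - cl y)^2)"
        by (simp add: dist_Pair_Pair dist_real_def)
      also have "\<dots> = sqrt 2 * \<bar>cl x - cl y\<bar>" by (simp add: real_sqrt_mult)
      finally show ?thesis .
    qed
    also have "L * (sqrt 2 * \<bar>cl x - cl y\<bar>) \<le> L * (2 * \<bar>x - y\<bar>)"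
      using L_pos sq2 cl_lip[of x y] by (intro mult_left_mono mult_mono) auto
    finally show ?thesis by simp
  qed
  define c1 where "c1 t = h (cl t, cl t) $ 1" for t
  define c3 where "c3 t = h (cl t, cl t) $ 3" for t
  obtain N1 where N1: "negligible N1" "\<And>t. t \<notin> N1 \<Longrightarrow> c1 differentiable (at t)"
    using lipschitz_ae_diff[of c1 "2*L"] lipc unfolding c1_def by blast
  obtain N3 where N3: "negligible N3" "\<And>t. t \<notin> N3 \<Longrightarrow> c3 differentiable (at t)"
    using lipschitz_ae_diff[of c3 "2*L"] lipc unfolding c3_def by blast
  define N0 where "N0 = N1 \<union> N3 \<union> {-1, 1}"
  have N0neg: "negligible N0" using N1(1) N3(1) by (simp add: N0_def)
  define BF where "BF k = (\<lambda>t. 4 * real_of_int k + 1 * t) ` N0 \<union> (\<lambda>t. (4 * real_of_int k + 2) + (-1) * t) ` N0" for k :: int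
  define BY where "BY = \<Union> (range BF)"
  have BYneg: "negligible BY" unfolding BY_def
  proof (rule negligible_countable_Union)
    show "countable (range BF)" by simp
    fix S assume "S \<in> range BF"
    then obtain k where Sk: "S = BF k" by blast
    show "negligible S" unfolding Sk BF_def
      by (intro negligible_Un negligible_affine_image N0neg)
  qed
  define BZ where "BZ = {z::complex. Im z \<in> BY}"
  have BZneg: "negligible BZ" unfolding BZ_def by (rule negligible_Im_preimage[OF BYneg])
  have fa: "\<forall>t\<in>{-1<..<1}. c1 t = h (t,t) $ 1" "\<forall>t\<in>{-1<..<1}. c3 t = h (t,t) $ 3"
    by (auto simp: c1_def c3_def cl_id)
  have good: "ghat h lam differentiable (at z) \<and>
           \<bar>jac_det (ghat h lam) z\<bar> \<ge> sin \<theta> * m * lam * exp (2 * lam * Re z) / (2 * L)"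
    if zB: "z \<notin> BZ" for z
  proof -
    have yB: "Im z \<notin> BY" using zB by (simp add: BZ_def)
    have notBF: "Im z \<notin> BF k" for k using yB by (auto simp: BY_def)
    define k where "k = \<lfloor>(Im z + 1)/4\<rfloor>"
    define s where "s = Im z - 4 * real_of_int k"
    have ks: "-1 \<le> s" "s < 3"
      using floor_correct[of "(Im z + 1)/4"] unfolding s_def k_def[symmetric] by (simp_all add: field_simps)
    have E2: "exp (2 * lam * Re z) = (exp (lam * Re z))^2"
    proof -
      have "exp (2 * lam * Re z) = exp (lam * Re z + lam * Re z)" by (simp add: algebra_simps)
      also have "\<dots> = exp (lam * Re z) * exp (lam * Re z)" by (rule exp_add)
      finally show ?thesis by (simp add: power2_eq_square)
    qed
    have smpos: "0 \<le> sin \<theta> * m" using theta mpos by (intro mult_nonneg_nonneg sin_ge_zero) auto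
    have concl: "ghat h lam differentiable (at z) \<and>
           \<bar>jac_det (ghat h lam) z\<bar> \<ge> sin \<theta> * m * lam * exp (2 * lam * Re z) / (2 * L)"
      if sig: "\<bar>\<sigma>\<bar> = 1" and s0: "-1 < \<sigma> * Im z + \<beta>" "\<sigma> * Im z + \<beta> < 1"
        and s0N: "\<sigma> * Im z + \<beta> \<notin> N0"
        and V: "open V" "z \<in> V"
        and eq: "\<And>w. w \<in> V \<Longrightarrow> ghat h lam w = complex_of_real (exp (lam * Re w)) *
                  Complex (c3 (\<sigma> * Im w + \<beta>)) (c1 (\<sigma> * Im w + \<beta>))"
      for \<sigma> \<beta> V
    proof -
      define s0 where "s0 = \<sigma> * Im z + \<beta>"
      have "c1 differentiable (at s0)" using N1(2) s0N by (auto simp: N0_def s0_def)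
      then obtain d1 where d1: "(c1 has_real_derivative d1) (at s0)" by (auto simp: real_differentiable_def)
      have "c3 differentiable (at s0)" using N3(2) s0N by (auto simp: N0_def s0_def)
      then obtain d3 where d3: "(c3 has_real_derivative d3) (at s0)" by (auto simp: real_differentiable_def)
      have geo: "sin \<theta> * m / L \<le> \<bar>c3 s0 * d1 - c1 s0 * d3\<bar>"
        by (rule geom[OF L_pos bilip theta nontang diag1 mpos mle _ _ fa d1 d3]) (use s0 in \<open>auto simp: s0_def\<close>)
      have ld: "ghat h lam differentiable (at z) \<and>
          jac_det (ghat h lam) z = \<sigma> * lam * (exp (lam * Re z))^2 * (c3 s0 * d1 - c1 s0 * d3)"
        using local_deriv[of c1 d1 \<sigma> z \<beta> c3 d3 V "ghat h lam" lam] d1 d3 V eq unfolding s0_def by blast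
      have "\<bar>jac_det (ghat h lam) z\<bar> = lam * (exp (lam * Re z))^2 * \<bar>c3 s0 * d1 - c1 s0 * d3\<bar>"
        using ld sig lam by (simp add: abs_mult)
      moreover have "sin \<theta> * m * lam * (exp (lam * Re z))^2 / (2 * L) \<le>
          lam * (exp (lam * Re z))^2 * \<bar>c3 s0 * d1 - c1 s0 * d3\<bar>"
        using L_pos lam smpos geo by (intro final_arith) auto
      ultimately show ?thesis using ld E2 by simp
    qed
    show ?thesis
    proof (cases "s \<le> 1")
      case True
      have sn1: "s \<noteq> 1" "s \<noteq> -1" "s \<notin> N0"
      proof -
        have "Im z = 4 * real_of_int k + 1 * s" by (simp add: s_def)
        then have "s \<notin> N0" using notBF[of k] by (auto simp: BF_def)
        then show "s \<noteq> 1" "s \<noteq> -1" "s \<notin> N0" by (auto simp: N0_def)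
      qed
      have s1: "-1 < s" "s < 1" using True ks sn1 by auto
      define V where "V = {w. 4 * real_of_int k - 1 < Im w} \<inter> {w. Im w < 4 * real_of_int k + 1}"
      have Vo: "open V" unfolding V_def
        by (intro open_Int open_Collect_less continuous_intros)
      have zV: "z \<in> V" using s1 by (simp add: V_def s_def)
      show ?thesis
      proof (rule concl[of 1 "- 4 * real_of_int k" V])
        show "-1 < 1 * Im z + - 4 * real_of_int k" "1 * Im z + - 4 * real_of_int k < 1"
          using s1 by (simp_all add: s_def)
        show "1 * Im z + - 4 * real_of_int k \<notin> N0" using sn1 by (simp add: s_def)
        fix w assume "w \<in> V"
        then have w: "4 * real_of_int k - 1 < Im w" "Im w < 4 * real_of_int k + 1" by (auto simp: V_def)
        have fk: "\<lfloor>(Im w + 1)/4\<rfloor> = k" using w by (intro floor_k) auto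
        have le1: "Im w - 4 * real_of_int \<lfloor>(Im w + 1)/4\<rfloor> \<le> 1" using fk w by simp
        show "ghat h lam w = complex_of_real (exp (lam * Re w)) *
                  Complex (c3 (1 * Im w + - 4 * real_of_int k)) (c1 (1 * Im w + - 4 * real_of_int k))"
          using w unfolding ghat_def if_P[OF le1] ghat_strip_eval[OF fk]
          by (simp add: c1_def c3_def cl_id)
      qed (use Vo zV in auto)
    next
      case False
      define s' where "s' = 2 - s"
      have sn1: "s' \<notin> N0"
      proof -
        have "Im z = (4 * real_of_int k + 2) + (-1) * s'" by (simp add: s_def s'_def)
        then show "s' \<notin> N0" using notBF[of k] by (auto simp: BF_def)
      qed
      have s1: "-1 < s'" "s' < 1" using False ks by (auto simp: s'_def)
      define V where "V = {w. 4 * real_of_int k + 1 < Im w} \<inter> {w. Im w < 4 * real_of_int k + 3}"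
      have Vo: "open V" unfolding V_def
        by (intro open_Int open_Collect_less continuous_intros)
      have zV: "z \<in> V" using s1 by (simp add: V_def s'_def s_def)
      show ?thesis
      proof (rule concl[of "-1" "4 * real_of_int k + 2" V])
        show "-1 < -1 * Im z + (4 * real_of_int k + 2)" "-1 * Im z + (4 * real_of_int k + 2) < 1"
          using s1 by (simp_all add: s'_def s_def)
        have "-1 * Im z + (4 * real_of_int k + 2) = s'" by (simp add: s'_def s_def)
        then show "-1 * Im z + (4 * real_of_int k + 2) \<notin> N0" using sn1 by simp
        fix w assume "w \<in> V"
        then have w: "4 * real_of_int k + 1 < Im w" "Im w < 4 * real_of_int k + 3" by (auto simp: V_def)
        have fk: "\<lfloor>(Im w + 1)/4\<rfloor> = k" using w by (intro floor_k) auto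
        have nle1: "\<not> Im w - 4 * real_of_int \<lfloor>(Im w + 1)/4\<rfloor> \<le> 1" using fk w by simp
        have fk2: "\<lfloor>(Im (cnj w + 2 * \<i>) + 1)/4\<rfloor> = - k" using w by (intro floor_k) auto
        have a1: "Im (cnj w + 2 * \<i>) - 4 * real_of_int (- k) = -1 * Im w + (4 * real_of_int k + 2)" by simp
        have a2: "-1 < -1 * Im w + (4 * real_of_int k + 2)" "-1 * Im w + (4 * real_of_int k + 2) < 1" using w by auto
        show "ghat h lam w = complex_of_real (exp (lam * Re w)) *
                  Complex (c3 (-1 * Im w + (4 * real_of_int k + 2))) (c1 (-1 * Im w + (4 * real_of_int k + 2)))"
          unfolding ghat_def if_not_P[OF nle1] ghat_strip_eval[OF fk2] a1
          using a2 by (simp add: c1_def c3_def cl_id)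
      qed (use Vo zV in auto)
    qed
  qed
  show ?thesis
    by (rule negligible_imp_AE[OF BZneg]) (use good in \<open>auto simp: m_def\<close>)
qed

end
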